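(* Let $\mathbb{X}$ be a finite-dimensional real Banach space. Then $\operatorname{Ext}B_{\mathbb{X}}$ is a $\mathcal{K}$-set: every linear operator $T:\mathbb{X}\to\mathbb{X}$ that preserves Birkhoff–James orthogonality at each extreme point of $B_{\mathbb{X}}$ satisfies $\|Tx\|=\lambda\|x\|$ for all $x\in\mathbb{X}$, for some constant $\lambda\ge0$.
   Context: $u\perp_B v$ means $\|u+\lambda v\|\ge\|u\|$ for all real $\lambda$; $T$ preserves Birkhoff–James orthogonality at $x$ if $x\perp_B w\Rightarrow Tx\perp_B Tw$ for all $w$. $\operatorname{Ext}B_{\mathbb{X}}$ is the set of extreme points of the closed unit ball. A set $A\subseteq S_{\mathbb{X}}$ is a $\mathcal{K}$-set if every bounded linear $T:\mathbb{X}\to\mathbb{X}$ preserving Birkhoff–James orthogonality at each point of $A$ is a scalar multiple of an isometry. *)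

theory Defs
  imports "HOL-Analysis.Analysis"
begin

definition bj_orth :: "'a::real_normed_vector \<Rightarrow> 'a \<Rightarrow> bool" where
  "bj_orth u v \<longleftrightarrow> (\<forall>c::real. norm (u + c *\<^sub>R v) \<ge> norm u)"

definition preserves_bj_at :: "('a::real_normed_vector \<Rightarrow> 'a) \<Rightarrow> 'a \<Rightarrow> bool" where
  "preserves_bj_at T x \<longleftrightarrow> (\<forall>w. bj_orth x w \<longrightarrow> bj_orth (T x) (T w))"

end

theory Submission
  imports Defs
begin


locale fdim =
  fixes Bs :: "'a::real_normed_vector set"
  assumes finB: "finite Bs" and indB: "independent Bs" and spB: "span Bs = UNIV"
begin

definition crd :: "'a \<Rightarrow> 'a \<Rightarrow> real" where "crd x b = representation Bs x b"

lemma crd_sum: "(\<Sum>b\<in>Bs. crd x b *\<^sub>R b) = x"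
  using sum_representation_eq[of Bs x Bs] indB spB finB by (simp add: crd_def)

lemma crd_linear: "linear (\<lambda>x. crd x b)"
  unfolding linear_iff crd_def using indB spB
  by (simp add: representation_add representation_scale)

lemma crd_out: "b \<notin> Bs \<Longrightarrow> crd x b = 0"
  unfolding crd_def using representation_ne_zero by metis

lemma crd_basis: "b' \<in> Bs \<Longrightarrow> crd b' b = (if b = b' then 1 else 0)"
  using representation_basis[OF indB, of b'] by (simp add: crd_def)

definition E :: "('a \<Rightarrow> real) \<Rightarrow> 'a" where "E c = (\<Sum>b\<in>Bs. c b *\<^sub>R b)"

lemma E_cont: "continuous_on UNIV E"
  unfolding E_def by (intro continuous_intros continuous_on_product_coordinates)

lemma crd_E: assumes "b \<in> Bs" shows "crd (E c) b = c b"
proof -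
  interpret l: linear "\<lambda>x. crd x b" by (rule crd_linear)
  have "crd (E c) b = (\<Sum>b'\<in>Bs. c b' * crd b' b)"
    unfolding E_def by (simp add: l.sum l.scale)
  also have "\<dots> = (\<Sum>b'\<in>Bs. if b' = b then c b' else 0)"
    by (intro sum.cong) (auto simp: crd_basis)
  also have "\<dots> = c b" using assms finB by simp
  finally show ?thesis .
qed

lemma E_crd: "E (crd x) = x" unfolding E_def by (rule crd_sum)

lemma compact_box: "compact (PiE Bs (\<lambda>_. {-R..R::real}))"
proof -
  let ?S = "\<lambda>i. if i \<in> Bs then {-R..R} else {undefined::real}"
  have "compactin (product_topology (\<lambda>_. euclidean) UNIV) (PiE UNIV ?S)"
    by (subst compactin_PiE) auto
  moreover have "PiE UNIV ?S = PiE Bs (\<lambda>_. {-R..R::real})"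
    by (auto simp: PiE_iff extensional_def split: if_splits)
  ultimately show ?thesis by (simp add: euclidean_product_topology)
qed

lemma crd_zero[simp]: "crd 0 b = 0"
  using linear_0[OF crd_linear] by simp

lemma abs_crd_le_sum: "\<bar>crd x b\<bar> \<le> (\<Sum>b\<in>Bs. \<bar>crd x b\<bar>)"
proof (cases "b \<in> Bs")
  case True thus ?thesis using finB by (intro member_le_sum) auto
qed (simp add: crd_out sum_nonneg)

lemma kappa: "\<exists>\<kappa>>0. \<forall>x. \<kappa> * (\<Sum>b\<in>Bs. \<bar>crd x b\<bar>) \<le> norm x"
proof (cases "Bs = {}")
  case True then show ?thesis by (intro exI[of _ 1]) simp
next
  case False
  define K where "K = PiE Bs (\<lambda>_. {-1..1::real}) \<inter> {c. (\<Sum>b\<in>Bs. \<bar>c b\<bar>) = 1}"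
  have "closed {c::'a\<Rightarrow>real. (\<Sum>b\<in>Bs. \<bar>c b\<bar>) = 1}"
    by (intro closed_Collect_eq continuous_intros continuous_on_product_coordinates)
  hence cK: "compact K" using compact_box[of 1] unfolding K_def by blast
  obtain b0 where b0: "b0 \<in> Bs" using False by auto
  let ?c = "\<lambda>b. if b = b0 then 1 else if b \<in> Bs then 0 else undefined::real"
  have "(\<Sum>b\<in>Bs. \<bar>?c b\<bar>) = (\<Sum>b\<in>Bs. if b = b0 then 1 else 0)"
    by (intro sum.cong) auto
  also have "\<dots> = 1" using b0 finB by simp
  finally have "?c \<in> K" unfolding K_def using b0 by auto
  hence neK: "K \<noteq> {}" by blast
  have "continuous_on K (\<lambda>c. norm (E c))"
    by (intro continuous_on_norm continuous_on_subset[OF E_cont]) auto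
  then obtain c0 where c0: "c0 \<in> K" "\<And>c. c \<in> K \<Longrightarrow> norm (E c0) \<le> norm (E c)"
    using continuous_attains_inf[OF cK neK] by blast
  have "E c0 \<noteq> 0"
  proof
    assume "E c0 = 0"
    hence "\<forall>b\<in>Bs. c0 b = 0" using crd_E by (metis crd_zero)
    hence "(\<Sum>b\<in>Bs. \<bar>c0 b\<bar>) = 0" by simp
    thus False using c0(1) unfolding K_def by simp
  qed
  hence kp: "norm (E c0) > 0" by simp
  show ?thesis
  proof (intro exI[of _ "norm (E c0)"] conjI allI kp)
    fix x
    define s where "s = (\<Sum>b\<in>Bs. \<bar>crd x b\<bar>)"
    show "norm (E c0) * (\<Sum>b\<in>Bs. \<bar>crd x b\<bar>) \<le> norm x"
    proof (cases "s = 0")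
      case True thus ?thesis by (simp add: s_def)
    next
      case False
      hence sp: "s > 0" unfolding s_def by (metis sum_nonneg abs_ge_zero order_less_le)
      define c where "c = restrict (\<lambda>b. crd x b / s) Bs"
      have "\<bar>crd x b\<bar> / s \<le> 1" for b using abs_crd_le_sum[of x b] sp by (simp add: s_def)
      hence "c \<in> PiE Bs (\<lambda>_. {-1..1})" unfolding c_def using sp
        by (auto simp: abs_le_iff divide_le_eq le_divide_eq) (smt (verit))
      moreover have "(\<Sum>b\<in>Bs. \<bar>c b\<bar>) = (\<Sum>b\<in>Bs. \<bar>crd x b\<bar> / s)"
        unfolding c_def using sp by (intro sum.cong) auto
      hence "(\<Sum>b\<in>Bs. \<bar>c b\<bar>) = 1" using sp by (simp add: sum_divide_distrib[symmetric] s_def)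
      ultimately have "c \<in> K" unfolding K_def by auto
      moreover have "E c = (1/s) *\<^sub>R x"
      proof -
        have "E c = (\<Sum>b\<in>Bs. (1/s) *\<^sub>R (crd x b *\<^sub>R b))"
          unfolding E_def c_def by (intro sum.cong) auto
        also have "\<dots> = (1/s) *\<^sub>R x" by (simp only: scaleR_sum_right[symmetric] crd_sum)
        finally show ?thesis .
      qed
      ultimately have "norm (E c0) \<le> norm x / s" using c0(2) sp by fastforce
      thus ?thesis using sp by (simp add: s_def le_divide_eq mult.commute)
    qed
  qed
qed

definition kp where "kp = (SOME \<kappa>. \<kappa>>0 \<and> (\<forall>x. \<kappa> * (\<Sum>b\<in>Bs. \<bar>crd x b\<bar>) \<le> norm x))"

lemma kp: "kp > 0" "kp * (\<Sum>b\<in>Bs. \<bar>crd x b\<bar>) \<le> norm x"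
  using someI_ex[OF kappa] unfolding kp_def[symmetric] by auto

lemma crd_bound: "\<bar>crd x b\<bar> \<le> norm x / kp"
  using kp(2)[of x] abs_crd_le_sum[of x b] by (simp add: le_divide_eq mult.commute) (smt (verit) kp(1) mult_left_mono)

lemma linear_bounded:
  fixes T :: "'a \<Rightarrow> 'b::real_normed_vector"
  assumes "linear T" shows "bounded_linear T"
proof -
  interpret l: linear T by fact
  define C where "C = (\<Sum>b\<in>Bs. norm (T b)) / kp"
  have "norm (T x) \<le> norm x * C" for x
  proof -
    have "T x = (\<Sum>b\<in>Bs. crd x b *\<^sub>R T b)"
      by (subst (1) crd_sum[symmetric, of x]) (simp add: l.sum l.scale)
    hence "norm (T x) \<le> (\<Sum>b\<in>Bs. \<bar>crd x b\<bar> * norm (T b))"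
      by (metis (no_types, lifting) norm_scaleR norm_sum sum.cong)
    also have "\<dots> \<le> (\<Sum>b\<in>Bs. (norm x / kp) * norm (T b))"
      by (intro sum_mono mult_right_mono crd_bound) auto
    also have "\<dots> = norm x * C" unfolding C_def by (simp add: sum_distrib_left sum_divide_distrib)
    finally show ?thesis .
  qed
  thus ?thesis by (intro bounded_linear_intro[where K=C]) (auto simp: l.add l.scale)
qed

lemma crd_cont: "continuous_on S (\<lambda>x. crd x b)"
proof -
  have "bounded_linear (\<lambda>x. crd x b)" by (rule linear_bounded[OF crd_linear])
  thus ?thesis by (simp add: linear_continuous_on)
qed

lemma compact_cb: fixes S :: "'a set" assumes "closed S" "bounded S" shows "compact S"
proof -
  obtain R where R: "\<And>x. x \<in> S \<Longrightarrow> norm x \<le> R" using assms(2) bounded_iff by blast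
  have "S \<subseteq> E ` PiE Bs (\<lambda>_. {-(R/kp)..R/kp})"
  proof
    fix x assume x: "x \<in> S"
    have "restrict (crd x) Bs \<in> PiE Bs (\<lambda>_. {-(R/kp)..R/kp})"
      using crd_bound[of x] R[OF x] kp(1) by (auto simp: abs_le_iff divide_right_mono) (smt (verit, best) divide_right_mono)+
    moreover have "E (restrict (crd x) Bs) = x" unfolding E_def using crd_sum[of x] by simp
    ultimately show "x \<in> E ` PiE Bs (\<lambda>_. {-(R/kp)..R/kp})" by (metis image_eqI)
  qed
  moreover have "compact (E ` PiE Bs (\<lambda>_. {-(R/kp)..R/kp}))"
    by (intro compact_continuous_image compact_box continuous_on_subset[OF E_cont]) auto
  ultimately show ?thesis using assms(1) by (metis compact_Int_closed inf.absorb_iff2)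
qed

end


lemma hb_step:
  fixes f :: "'a::real_normed_vector \<Rightarrow> real"
  assumes V: "subspace V" and lf: "linear f" and le: "\<forall>y\<in>V. f y \<le> norm y"
  shows "\<exists>f'. linear f' \<and> (\<forall>y\<in>V. f' y = f y) \<and> (\<forall>y\<in>span (insert v V). f' y \<le> norm y)"
proof (cases "v \<in> V")
  case True
  have "span (insert v V) = span V" by (rule span_redundant) (use True span_superset in blast)
  hence "span (insert v V) = V" using V by simp
  thus ?thesis using lf le by auto
next
  case False
  interpret l: linear f by fact
  define A where "A = (\<lambda>u. f u - norm (u - v)) ` V"
  have bd: "a \<le> norm (w + v) - f w" if aA: "a \<in> A" and wV: "w \<in> V" for a w
  proof -
    obtain u where u: "u \<in> V" "a = f u - norm (u - v)" using aA unfolding A_def by blast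
    have "f u + f w = f (u + w)" by (simp add: l.add)
    also have "\<dots> \<le> norm (u + w)" using le u(1) wV V by (simp add: subspace_add)
    also have "\<dots> \<le> norm (u - v) + norm (w + v)" using norm_triangle_ineq[of "u - v" "w + v"] by simp
    finally show ?thesis using u(2) by simp
  qed
  have neA: "A \<noteq> {}" unfolding A_def using subspace_0[OF V] by blast
  have bdA: "bdd_above A" using bd[of _ 0] V by (auto simp: subspace_0 bdd_above_def)
  define c where "c = Sup A"
  have c1: "f u - norm (u - v) \<le> c" if "u \<in> V" for u
    unfolding c_def using that bdA by (intro cSup_upper) (auto simp: A_def)
  have c2: "c \<le> norm (w + v) - f w" if "w \<in> V" for w
    unfolding c_def using that neA by (intro cSup_least) (auto intro: bd)
  obtain BV where BV: "BV \<subseteq> V" "independent BV" "V \<subseteq> span BV"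
    using maximal_independent_subset by blast
  have spBV: "span BV = V" using span_minimal[OF BV(1) V] BV(3) by blast
  have ind: "independent (insert v BV)" using BV(2) False spBV by (intro independent_insertI) auto
  then obtain f' where f': "linear f'" "\<forall>x\<in>insert v BV. f' x = (if x = v then c else f x)"
    using linear_independent_extend[OF ind, of "\<lambda>x. if x = v then c else f x"] by blast
  have eqV: "f' y = f y" if "y \<in> V" for y
  proof (rule linear_eq_on[OF f'(1) lf])
    show "y \<in> span BV" using that spBV by simp
    show "b \<in> BV \<Longrightarrow> f' b = f b" for b using f'(2) BV(1) False by auto
  qed
  interpret l': linear f' by fact
  have "f' y \<le> norm y" if y: "y \<in> span (insert v V)" for y
  proof -
    have sV: "span V = V" using V by simp
    obtain k where k: "y - k *\<^sub>R v \<in> V" using y sV unfolding span_insert by auto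
    define w where "w = y - k *\<^sub>R v"
    have yw: "y = w + k *\<^sub>R v" by (simp add: w_def)
    have wV: "w \<in> V" using k w_def by simp
    have fv: "f' v = c" using f'(2) by simp
    have "f' y = f' w + k * f' v" unfolding yw by (simp add: l'.add l'.scale)
    hence fy: "f' y = f w + k * c" using eqV[OF wV] fv by simp
    consider "k > 0" | "k < 0" | "k = 0" by linarith
    thus ?thesis
    proof cases
      case 1
      have "(1/k) *\<^sub>R w \<in> V" using V wV by (rule subspace_scale)
      from c2[OF this] have "c \<le> norm ((1/k) *\<^sub>R (w + k *\<^sub>R v)) - f w / k"
        using 1 by (simp add: l.scale scaleR_add_right)
      hence "c \<le> norm (w + k *\<^sub>R v) / k - f w / k" using 1 by simp
      hence "k * c \<le> norm (w + k *\<^sub>R v) - f w" using 1 by (simp add: field_simps)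
      thus ?thesis using fy yw by simp
    next
      case 2
      have "(1/(-k)) *\<^sub>R w \<in> V" using V wV by (rule subspace_scale)
      from c1[OF this] have c1': "f ((1/(-k)) *\<^sub>R w) - norm ((1/(-k)) *\<^sub>R w - v) \<le> c" .
      have "(1/(-k)) *\<^sub>R (k *\<^sub>R v) = ((1/(-k)) * k) *\<^sub>R v" by simp
      also have "(1/(-k)) * k = -1" using 2 by simp
      finally have "(1/(-k)) *\<^sub>R (w + k *\<^sub>R v) = (1/(-k)) *\<^sub>R w - v" by (simp add: scaleR_add_right)
      hence "norm ((1/(-k)) *\<^sub>R w - v) = norm ((1/(-k)) *\<^sub>R (w + k *\<^sub>R v))" by simp
      also have "\<dots> = \<bar>1/(-k)\<bar> * norm (w + k *\<^sub>R v)" by (rule norm_scaleR)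
      also have "\<dots> = norm (w + k *\<^sub>R v) / (-k)" using 2 by simp
      finally have "norm ((1/(-k)) *\<^sub>R w - v) = norm (w + k *\<^sub>R v) / (-k)" .
      moreover have "f ((1/(-k)) *\<^sub>R w) = f w / (-k)" using l.scale[of "1/(-k)" w] by simp
      ultimately have "f w / (-k) - norm (w + k *\<^sub>R v) / (-k) \<le> c" using c1' by simp
      hence "f w - norm (w + k *\<^sub>R v) \<le> - k * c" using 2 by (simp add: field_simps)
      thus ?thesis using fy yw by simp
    next
      case 3 thus ?thesis using fy yw le wV by simp
    qed
  qed
  thus ?thesis using f'(1) eqV by blast
qed

lemma hb_fin:
  fixes f :: "'a::real_normed_vector \<Rightarrow> real"
  assumes "finite A" "subspace V" "linear f" "\<forall>y\<in>V. f y \<le> norm y"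
  shows "\<exists>f'. linear f' \<and> (\<forall>y\<in>V. f' y = f y) \<and> (\<forall>y\<in>span (A \<union> V). f' y \<le> norm y)"
  using assms(1)
proof (induction A rule: finite_induct)
  case empty
  have "span ({} \<union> V) = V" using assms(2) by simp
  hence "\<forall>y\<in>span ({} \<union> V). f y \<le> norm y" using assms(4) by metis
  thus ?case using assms(3) by blast
next
  case (insert a A)
  then obtain f1 where f1: "linear f1" "\<forall>y\<in>V. f1 y = f y" "\<forall>y\<in>span (A \<union> V). f1 y \<le> norm y" by blast
  obtain f2 where f2: "linear f2" "\<forall>y\<in>span (A \<union> V). f2 y = f1 y"
      "\<forall>y\<in>span (insert a (span (A \<union> V))). f2 y \<le> norm y"
    using hb_step[OF subspace_span f1(1) f1(3)] by blast
  have "span (insert a A \<union> V) \<subseteq> span (insert a (span (A \<union> V)))"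
    by (intro span_mono) (auto intro: span_base)
  moreover have "V \<subseteq> span (A \<union> V)" by (auto intro: span_base)
  ultimately show ?case using f1 f2 by (intro exI[of _ f2]) auto
qed

lemma hb:
  fixes x :: "'a::real_normed_vector" and B0 :: "'a set"
  assumes "finite B0" "span B0 = UNIV"
  shows "\<exists>g. linear g \<and> (\<forall>y. g y \<le> norm y) \<and> g x = norm x"
proof (cases "x = 0")
  case True
  thus ?thesis by (intro exI[of _ "\<lambda>_. 0"]) (auto simp: linear_iff)
next
  case False
  have "independent {x}" using False by (simp add: independent_insert)
  then obtain f0 where f0: "linear f0" "f0 x = norm x"
    using linear_independent_extend[of "{x}" "\<lambda>_. norm x"] by auto
  interpret l: linear f0 by fact
  have "\<forall>y\<in>span {x}. f0 y \<le> norm y"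
    by (auto simp: span_singleton l.scale f0(2) intro!: mult_right_mono)
  then obtain f' where "linear f'" "\<forall>y\<in>span {x}. f' y = f0 y" "\<forall>y\<in>span (B0 \<union> span {x}). f' y \<le> norm y"
    using hb_fin[of B0 "span {x}" f0] assms(1) f0(1) by blast
  moreover have "span (B0 \<union> span {x}) = UNIV"
    using span_mono[of B0 "B0 \<union> span {x}"] assms(2) by auto
  moreover have "x \<in> span {x}" by (simp add: span_base)
  ultimately show ?thesis using f0(2) by auto
qed



definition supp :: "('a::real_normed_vector \<Rightarrow> real) \<Rightarrow> 'a \<Rightarrow> bool" where
  "supp g x \<longleftrightarrow> linear g \<and> (\<forall>y. g y \<le> norm y) \<and> g x = norm x"

lemma bj_of_supp: assumes "supp g x" "g w = 0" shows "bj_orth x w"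
proof -
  interpret l: linear g using assms(1) supp_def by blast
  have "norm x \<le> norm (x + c *\<^sub>R w)" for c
  proof -
    have "g (x + c *\<^sub>R w) = norm x" using assms by (simp add: l.add l.scale supp_def)
    thus ?thesis using assms(1) unfolding supp_def by metis
  qed
  thus ?thesis unfolding bj_orth_def by blast
qed

lemma orth_scale: assumes "bj_orth u v" shows "\<bar>a\<bar> * norm u \<le> norm (a *\<^sub>R u + v)"
proof (cases "a = 0")
  case False
  have "a *\<^sub>R u + v = a *\<^sub>R (u + (1/a) *\<^sub>R v)" using False by (simp add: scaleR_add_right)
  hence "norm (a *\<^sub>R u + v) = \<bar>a\<bar> * norm (u + (1/a) *\<^sub>R v)" by simp
  moreover have "norm u \<le> norm (u + (1/a) *\<^sub>R v)" using assms unfolding bj_orth_def by blast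
  ultimately show ?thesis by (simp add: mult_left_mono)
qed simp

lemma key_ext:
  assumes lin: "linear T" and pr: "preserves_bj_at T e" and s: "supp g e" and e1: "norm e = 1"
  shows "\<bar>g y\<bar> * norm (T e) \<le> norm (T y)"
proof -
  interpret l: linear g using s supp_def by blast
  interpret t: linear T by fact
  define w where "w = y - g y *\<^sub>R e"
  have ge: "g e = 1" using s e1 unfolding supp_def by simp
  have "g w = 0" unfolding w_def by (simp add: l.diff l.scale ge)
  hence "bj_orth e w" by (rule bj_of_supp[OF s])
  hence "bj_orth (T e) (T w)" using pr unfolding preserves_bj_at_def by blast
  from orth_scale[OF this, of "g y"] have "\<bar>g y\<bar> * norm (T e) \<le> norm (g y *\<^sub>R T e + T w)" .
  also have "g y *\<^sub>R T e + T w = T y" unfolding w_def by (simp add: t.diff t.scale)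
  finally show ?thesis .
qed

context fdim
begin

definition q :: "'a \<Rightarrow> real" where "q z = (\<Sum>b\<in>Bs. (crd z b)^2)"

lemma q_cont: "continuous_on S q"
  unfolding q_def by (intro continuous_intros crd_cont)

lemma q_strict:
  assumes "a \<noteq> b" "0 < u" "u < 1"
  shows "q ((1-u) *\<^sub>R a + u *\<^sub>R b) < (1-u) * q a + u * q b"
proof -
  have cr: "crd ((1-u) *\<^sub>R a + u *\<^sub>R b) c = (1-u) * crd a c + u * crd b c" for c
  proof -
    interpret l: linear "\<lambda>x. crd x c" by (rule crd_linear)
    show ?thesis by (simp add: l.add l.scale)
  qed
  have eq: "((1-u) * s + u * t)^2 = (1-u) * s^2 + u * t^2 - u * (1-u) * (s - t)^2" for s t :: real
    by (simp add: power2_eq_square algebra_simps)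
  have "q ((1-u) *\<^sub>R a + u *\<^sub>R b) = (\<Sum>c\<in>Bs. (1-u) * (crd a c)^2 + u * (crd b c)^2 - u * (1-u) * (crd a c - crd b c)^2)"
    unfolding q_def by (intro sum.cong) (auto simp: cr eq)
  also have "\<dots> = (1-u) * q a + u * q b - u * (1-u) * (\<Sum>c\<in>Bs. (crd a c - crd b c)^2)"
    unfolding q_def by (simp add: sum.distrib sum_subtractf sum_distrib_left)
  finally have *: "q ((1-u) *\<^sub>R a + u *\<^sub>R b) = (1-u) * q a + u * q b - u * (1-u) * (\<Sum>c\<in>Bs. (crd a c - crd b c)^2)" .
  have "\<exists>c\<in>Bs. crd a c \<noteq> crd b c"
  proof (rule ccontr)
    assume "\<not> ?thesis"
    hence "(\<Sum>c\<in>Bs. crd a c *\<^sub>R c) = (\<Sum>c\<in>Bs. crd b c *\<^sub>R c)" by (intro sum.cong) auto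
    thus False using assms(1) by (simp add: crd_sum)
  qed
  then obtain c where c: "c \<in> Bs" "crd a c \<noteq> crd b c" by blast
  have "0 < (crd a c - crd b c)^2" using c by simp
  also have "\<dots> \<le> (\<Sum>c\<in>Bs. (crd a c - crd b c)^2)" using c finB by (intro member_le_sum) auto
  finally have "0 < u * (1-u) * (\<Sum>c\<in>Bs. (crd a c - crd b c)^2)" using assms by simp
  with * show ?thesis by simp
qed

lemma star:
  assumes lin: "linear T"
    and pres: "\<And>x. x extreme_point_of cball (0::'a) 1 \<Longrightarrow> preserves_bj_at T x"
    and x0: "x \<noteq> 0" and sg: "supp g x"
  shows "norm (T x) * g y \<le> norm x * norm (T y)"
proof -
  interpret lg: linear g using sg supp_def by blast
  interpret lt: linear T by fact
  have gle: "g z \<le> norm z" for z using sg supp_def by blast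
  have gc: "continuous_on UNIV g" using linear_bounded[of g] lg.linear_axioms linear_continuous_on by blast
  have Tc: "continuous_on S (\<lambda>z. norm (T z))" for S
    using linear_bounded[OF lin] linear_continuous_on continuous_on_norm continuous_on_subset by blast
  define x1 where "x1 = (1 / norm x) *\<^sub>R x"
  have gx1: "g x1 = 1" using sg x0 unfolding x1_def supp_def by (simp add: lg.scale)
  have nx1: "norm x1 = 1" using x0 unfolding x1_def by simp
  define F1 where "F1 = cball 0 1 \<inter> {z. g z = 1}"
  have "closed {z. g z = 1}" by (intro closed_Collect_eq gc continuous_on_const)
  hence cF1: "compact F1" unfolding F1_def by (intro compact_cb) auto
  have x1F: "x1 \<in> F1" using gx1 nx1 unfolding F1_def by simp
  have neF1: "F1 \<noteq> {}" using x1F by blast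
  obtain z1 where z1: "z1 \<in> F1" "\<And>z. z \<in> F1 \<Longrightarrow> norm (T z) \<le> norm (T z1)"
    using continuous_attains_sup[OF cF1 neF1 Tc] by blast
  define M1 where "M1 = norm (T z1)"
  define F2 where "F2 = F1 \<inter> {z. norm (T z) = M1}"
  have "closed {z. norm (T z) = M1}" by (intro closed_Collect_eq Tc continuous_on_const)
  hence cF2: "compact F2" unfolding F2_def using cF1 by blast
  have neF2: "F2 \<noteq> {}" using z1 unfolding F2_def M1_def by blast
  obtain e where e: "e \<in> F2" "\<And>z. z \<in> F2 \<Longrightarrow> q z \<le> q e"
    using continuous_attains_sup[OF cF2 neF2 q_cont] by blast
  have eF1: "e \<in> F1" and NeM: "norm (T e) = M1" using e(1) unfolding F2_def by auto
  have ge: "g e = 1" and ne1: "norm e \<le> 1" using eF1 unfolding F1_def by auto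
  have ne: "norm e = 1" using gle[of e] ge ne1 by simp
  have ext: "e extreme_point_of cball 0 1"
    unfolding extreme_point_of_def
  proof (intro conjI ballI)
    show "e \<in> cball 0 1" using ne by simp
    fix a b assume a: "a \<in> cball (0::'a) 1" and b: "b \<in> cball (0::'a) 1"
    show "e \<notin> open_segment a b"
    proof
      assume "e \<in> open_segment a b"
      then obtain u where ab: "a \<noteq> b" and u: "0 < u" "u < 1" and eu: "e = (1-u) *\<^sub>R a + u *\<^sub>R b"
        by (auto simp: in_segment)
      have ga: "g a \<le> 1" using gle[of a] a by simp
      have gb: "g b \<le> 1" using gle[of b] b by simp
      have "(1-u) * g a + u * g b = 1" using ge eu by (simp add: lg.add lg.scale)
      hence "(1-u) * (1 - g a) + u * (1 - g b) = 0" by (simp add: algebra_simps)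
      moreover have "(1-u) * (1 - g a) \<ge> 0" "u * (1 - g b) \<ge> 0" using u ga gb by auto
      ultimately have "(1-u) * (1 - g a) = 0" "u * (1 - g b) = 0" by linarith+
      hence "g a = 1" "g b = 1" using u by auto
      hence aF1: "a \<in> F1" and bF1: "b \<in> F1" using a b unfolding F1_def by auto
      have Na: "norm (T a) \<le> M1" and Nb: "norm (T b) \<le> M1" using z1(2) aF1 bF1 M1_def by auto
      have "M1 = norm ((1-u) *\<^sub>R T a + u *\<^sub>R T b)" using NeM eu by (simp add: lt.add lt.scale)
      also have "\<dots> \<le> (1-u) * norm (T a) + u * norm (T b)"
        using norm_triangle_ineq[of "(1-u) *\<^sub>R T a" "u *\<^sub>R T b"] u by simp
      finally have "M1 \<le> (1-u) * norm (T a) + u * norm (T b)" .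
      hence "(1-u) * (M1 - norm (T a)) + u * (M1 - norm (T b)) \<le> 0" by (simp add: algebra_simps)
      moreover have "(1-u) * (M1 - norm (T a)) \<ge> 0" "u * (M1 - norm (T b)) \<ge> 0" using u Na Nb by auto
      ultimately have "(1-u) * (M1 - norm (T a)) = 0" "u * (M1 - norm (T b)) = 0" by linarith+
      hence "norm (T a) = M1" "norm (T b) = M1" using u by auto
      hence "a \<in> F2" "b \<in> F2" using aF1 bF1 unfolding F2_def by auto
      hence "q a \<le> q e" "q b \<le> q e" using e(2) by auto
      hence "(1-u) * q a \<le> (1-u) * q e" "u * q b \<le> u * q e"
        using u by (auto intro: mult_left_mono)
      hence "(1-u) * q a + u * q b \<le> q e" by (simp add: algebra_simps)
      moreover have "q e < (1-u) * q a + u * q b" using q_strict[OF ab u] eu by simp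
      ultimately show False by simp
    qed
  qed
  have se: "supp g e" using sg ge ne unfolding supp_def by simp
  have key: "\<bar>g y\<bar> * norm (T e) \<le> norm (T y)"
    by (rule key_ext[OF lin pres[OF ext] se ne])
  have "norm (T x1) \<le> norm (T e)" using z1(2)[OF x1F] NeM M1_def by simp
  moreover have "norm (T x1) = norm (T x) / norm x" using x0 unfolding x1_def by (simp add: lt.scale)
  ultimately have Tx: "norm (T x) \<le> norm x * norm (T e)" using x0 by (simp add: divide_le_eq mult.commute)
  show ?thesis
  proof (cases "g y \<le> 0")
    case True
    have "norm (T x) * g y \<le> 0" using True by (simp add: mult_nonneg_nonpos)
    also have "0 \<le> norm x * norm (T y)" by simp
    finally show ?thesis .
  next
    case False
    have "norm (T x) * g y \<le> norm x * norm (T e) * g y" using Tx False by (simp add: mult_right_mono)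
    also have "\<dots> = norm x * (\<bar>g y\<bar> * norm (T e))" using False by simp
    also have "\<dots> \<le> norm x * norm (T y)" using key by (simp add: mult_left_mono)
    finally show ?thesis .
  qed
qed

end


lemma prodlem:
  fixes h a :: "nat \<Rightarrow> real"
  assumes "\<And>i. i < k \<Longrightarrow> h i * (1 - a i) \<le> h (Suc i)" "\<And>i. h i \<ge> 0" "\<And>i. a i \<ge> 0"
  shows "h 0 * (1 - (\<Sum>i<k. a i)) \<le> h k"
  using assms(1)
proof (induction k)
  case 0 thus ?case by simp
next
  case (Suc k)
  have IH: "h 0 * (1 - (\<Sum>i<k. a i)) \<le> h k" using Suc by simp
  have st: "h k * (1 - a k) \<le> h (Suc k)" using Suc by simp
  have S0: "(\<Sum>i<k. a i) \<ge> 0" using assms(3) by (simp add: sum_nonneg)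
  show ?case
  proof (cases "1 - (\<Sum>i<Suc k. a i) \<le> 0")
    case True
    hence "h 0 * (1 - (\<Sum>i<Suc k. a i)) \<le> 0" using assms(2)[of 0] by (simp add: mult_nonneg_nonpos)
    thus ?thesis using assms(2)[of "Suc k"] by linarith
  next
    case False
    hence p1: "1 - a k \<ge> 0" "1 - (\<Sum>i<k. a i) \<ge> 0" using S0 assms(3)[of k] by auto
    have "h 0 * (1 - (\<Sum>i<Suc k. a i)) \<le> h 0 * ((1 - (\<Sum>i<k. a i)) * (1 - a k))"
    proof -
      have "(1 - (\<Sum>i<Suc k. a i)) \<le> (1 - (\<Sum>i<k. a i)) * (1 - a k)"
        using S0 assms(3)[of k] by (simp add: algebra_simps)
      thus ?thesis using assms(2)[of 0] by (simp add: mult_left_mono)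
    qed
    also have "\<dots> = (h 0 * (1 - (\<Sum>i<k. a i))) * (1 - a k)" by simp
    also have "\<dots> \<le> h k * (1 - a k)" using IH p1 by (simp add: mult_right_mono)
    also have "\<dots> \<le> h (Suc k)" by (rule st)
    finally show ?thesis .
  qed
qed

lemma chain_k:
  fixes N :: "'a::real_normed_vector \<Rightarrow> real" and a b :: 'a
  assumes N0: "\<And>z. N z \<ge> 0"
    and star: "\<And>x g y. x \<noteq> 0 \<Longrightarrow> supp g x \<Longrightarrow> N x * g y \<le> norm x * N y"
    and hbx: "\<And>x::'a. \<exists>g. supp g x"
    and dl: "\<delta> > 0" "\<And>z. z \<in> closed_segment a b \<Longrightarrow> \<delta> \<le> norm z"
    and k: "k \<ge> 1"
  shows "N a / norm a * (1 - 2 * norm (b - a) / (real k * \<delta>)) \<le> N b / norm b"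
proof -
  define z where "z i = a + (real i / real k) *\<^sub>R (b - a)" for i
  define G where "G i = (SOME g. supp g (z i))" for i
  have sG: "supp (G i) (z i)" for i unfolding G_def using hbx[of "z i"] by (rule someI_ex)
  have zseg: "z i \<in> closed_segment a b" if "i \<le> k" for i
  proof -
    have "0 \<le> real i / real k" "real i / real k \<le> 1" using that k by auto
    moreover have "z i = (1 - real i / real k) *\<^sub>R a + (real i / real k) *\<^sub>R b"
      unfolding z_def by (simp add: algebra_simps)
    ultimately show ?thesis unfolding in_segment by blast
  qed
  define phi where "phi i = norm (z i)" for i
  have phid: "phi i \<ge> \<delta>" if "i \<le> k" for i using dl(2)[OF zseg[OF that]] phi_def by simp
  define d where "d i = G i (b - a)" for i
  define D where "D = 1 / real k"
  have Dp: "D > 0" using k D_def by simp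
  have zs: "z (Suc i) = z i + D *\<^sub>R (b - a)" for i
    unfolding z_def D_def by (simp add: algebra_simps add_divide_distrib)
  have lin: "linear (G i)" for i using sG supp_def by blast
  have Gle: "G i y \<le> norm y" for i y using sG supp_def by blast
  have Gz: "G i (z i) = phi i" for i using sG[of i] unfolding supp_def phi_def by blast
  have F1: "G i (z (Suc i)) = phi i + D * d i" for i
  proof -
    interpret l: linear "G i" by (rule lin)
    show ?thesis unfolding zs d_def by (simp add: l.add l.scale Gz)
  qed
  have F3: "G (Suc i) (z i) = phi (Suc i) - D * d (Suc i)" for i
  proof -
    interpret l: linear "G (Suc i)" by (rule lin)
    have "z i = z (Suc i) - D *\<^sub>R (b - a)" using zs by simp
    thus ?thesis unfolding d_def by (simp add: l.diff l.scale Gz)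
  qed
  have dbd: "\<bar>d i\<bar> \<le> norm (b - a)" for i
  proof -
    interpret l: linear "G i" by (rule lin)
    have d1: "d i \<le> norm (b - a)" using Gle d_def by simp
    have "G i (a - b) = - G i (b - a)" using l.neg[of "b - a"] by simp
    moreover have "norm (a - b) = norm (b - a)" by (rule norm_minus_commute)
    ultimately have "- d i \<le> norm (b - a)" using Gle[of i "a - b"] d_def by simp
    thus ?thesis using d1 by linarith
  qed
  define e where "e i = phi (Suc i) - G i (z (Suc i))" for i
  have e0: "e i \<ge> 0" for i using Gle[of i "z (Suc i)"] e_def phi_def by simp
  have eb: "e i \<le> D * (d (Suc i) - d i)" for i
  proof -
    have "e i = phi (Suc i) - G i (z (Suc i))" by (simp add: e_def)
    moreover have "G (Suc i) (z i) \<le> phi i" using Gle[of "Suc i" "z i"] by (simp add: phi_def)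
    ultimately have "e i \<le> D * d (Suc i) - D * d i" using F3[of i] F1[of i] by linarith
    thus ?thesis by (simp add: right_diff_distrib)
  qed
  define h where "h i = N (z i) / phi i" for i
  have h0: "h i \<ge> 0" for i using N0 h_def phi_def by simp
  have step: "h i * (1 - e i / \<delta>) \<le> h (Suc i)" if i: "i < k" for i
  proof -
    have pi: "phi i \<ge> \<delta>" "phi (Suc i) \<ge> \<delta>" using phid i by auto
    hence pp: "phi i > 0" "phi (Suc i) > 0" using dl by linarith+
    hence zi0: "z i \<noteq> 0" using phi_def by auto
    have st: "N (z i) * G i (z (Suc i)) \<le> phi i * N (z (Suc i))"
      using star[OF zi0 sG] phi_def by simp
    have "h i * (1 - e i / \<delta>) \<le> h i * (1 - e i / phi (Suc i))"
    proof -
      have "e i / phi (Suc i) \<le> e i / \<delta>" using pi(2) dl(1) e0 by (simp add: frac_le)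
      thus ?thesis using h0 by (simp add: mult_left_mono)
    qed
    also have "\<dots> = N (z i) * G i (z (Suc i)) / (phi i * phi (Suc i))"
      using pp unfolding h_def e_def by (simp add: field_simps)
    also have "\<dots> \<le> phi i * N (z (Suc i)) / (phi i * phi (Suc i))"
      by (rule divide_right_mono[OF st]) (use pp in simp)
    also have "\<dots> = h (Suc i)" using pp unfolding h_def by simp
    finally show ?thesis .
  qed
  have "h 0 * (1 - (\<Sum>i<k. e i / \<delta>)) \<le> h k"
    by (rule prodlem[of k h "\<lambda>i. e i / \<delta>", OF step h0]) (use e0 dl in auto)
  moreover have "(\<Sum>i<k. e i / \<delta>) \<le> 2 * norm (b - a) / (real k * \<delta>)"
  proof -
    have "(\<Sum>i<k. e i) \<le> (\<Sum>i<k. D * (d (Suc i) - d i))" by (intro sum_mono eb)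
    also have "\<dots> = D * (d k - d 0)" by (simp add: sum_distrib_left[symmetric] sum_lessThan_telescope)
    also have "\<dots> \<le> D * (2 * norm (b - a))"
      using dbd[of k] dbd[of 0] Dp by (intro mult_left_mono) auto
    finally have "(\<Sum>i<k. e i) \<le> 2 * norm (b - a) / real k" unfolding D_def by simp
    thus ?thesis using dl(1) by (simp add: sum_divide_distrib[symmetric] divide_right_mono field_simps)
  qed
  ultimately have "h 0 * (1 - 2 * norm (b - a) / (real k * \<delta>)) \<le> h k"
    using h0[of 0] by (smt (verit) mult_left_mono)
  moreover have "z 0 = a" "z k = b" using k unfolding z_def by auto
  ultimately show ?thesis unfolding h_def phi_def by simp
qed



lemma ratio_scale:
  assumes "linear T" "c \<noteq> 0"
  shows "norm (T (c *\<^sub>R x)) / norm (c *\<^sub>R x) = norm (T x) / norm (x::'a::real_normed_vector)"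
proof -
  interpret l: linear T by fact
  show ?thesis using assms(2) by (simp add: l.scale)
qed

theorem mainTheorem15:
  fixes T :: "'a::banach \<Rightarrow> 'a"
  assumes findim: "\<exists>B. finite B \<and> span B = (UNIV :: 'a set)"
    and lin: "linear T"
    and pres: "\<And>x. x extreme_point_of cball (0::'a) 1 \<Longrightarrow> preserves_bj_at T x"
  shows "\<exists>c::real. c \<ge> 0 \<and> (\<forall>x. norm (T x) = c * norm x)"
proof -
  interpret lt: linear T by (rule lin)
  obtain B0 :: "'a set" where B0: "finite B0" "span B0 = UNIV" using findim by blast
  obtain Bs where Bs: "Bs \<subseteq> B0" "independent Bs" "B0 \<subseteq> span Bs"
    using maximal_independent_subset[of B0] by blast
  have fB: "finite Bs" using finite_subset[OF Bs(1) B0(1)] .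
  have sB: "span Bs = UNIV"
    using span_mono[OF Bs(3)] B0(2) by (simp add: span_span top.extremum_unique)
  interpret fd: fdim Bs using fB Bs(2) sB by unfold_locales
  define N where "N z = norm (T z)" for z
  have N0: "N z \<ge> 0" for z by (simp add: N_def)
  have star': "N x * g y \<le> norm x * N y" if "x \<noteq> 0" "supp g x" for x g y
    using fd.star[OF lin pres that] N_def by simp
  have hbx: "\<exists>g. supp g x" for x :: 'a using hb[OF B0, of x] supp_def by blast
  have le: "N a / norm a \<le> N b / norm b" if nz: "0 \<notin> closed_segment a b" for a b
  proof (rule ccontr)
    assume ass: "\<not> N a / norm a \<le> N b / norm b"
    obtain z0 where z0: "z0 \<in> closed_segment a b" "\<And>z. z \<in> closed_segment a b \<Longrightarrow> norm z0 \<le> norm z"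
      using continuous_attains_inf[OF compact_segment[of a b] _ continuous_on_norm_id]
        ends_in_segment(1)[of a b] by blast
    define \<delta> where "\<delta> = norm z0"
    have dp: "\<delta> > 0" using z0(1) nz \<delta>_def by (metis zero_less_norm_iff)
    define H0 where "H0 = N a / norm a"
    define H1 where "H1 = N b / norm b"
    define C where "C = 2 * norm (b - a) / \<delta>"
    have H0: "H0 \<ge> 0" using N0 H0_def by simp
    have H01: "H1 < H0" using ass H0_def H1_def by simp
    have C0: "C \<ge> 0" using dp C_def by simp
    obtain n :: nat where n: "H0 * C / (H0 - H1) < real n" using reals_Archimedean2 by blast
    define k where "k = max n 1"
    have k1: "k \<ge> 1" by (simp add: k_def)
    have kn: "H0 * C / (H0 - H1) < real k" using n k_def by linarith
    have ch0: "N a / norm a * (1 - 2 * norm (b - a) / (real k * \<delta>)) \<le> N b / norm b"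
      by (rule chain_k[where N=N and k=k and \<delta>=\<delta>]) (use N0 star' hbx dp z0(2) \<delta>_def k1 in auto)
    hence ch: "H0 * (1 - 2 * norm (b - a) / (real k * \<delta>)) \<le> H1" using H0_def H1_def by simp
    have "2 * norm (b - a) / (real k * \<delta>) = C / real k" using C_def by simp
    hence ch': "H0 - H0 * C / real k \<le> H1" using ch by (simp add: algebra_simps)
    have kp: "real k > 0" using k1 by simp
    have "H0 * C < (H0 - H1) * real k" using kn H01 by (simp add: divide_less_eq mult.commute)
    hence "H0 * C / real k < H0 - H1" using kp by (simp add: divide_less_eq)
    thus False using ch' by linarith
  qed
  have eq: "N a / norm a = N b / norm b" if a0: "a \<noteq> 0" and b0: "b \<noteq> 0" for a b
  proof (cases "0 \<in> closed_segment a b")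
    case False
    have "0 \<notin> closed_segment b a" using False by (simp add: closed_segment_commute)
    thus ?thesis using le[OF False] le[of b a] by linarith
  next
    case True
    then obtain u where u: "0 \<le> u" "u \<le> 1" "0 = (1-u) *\<^sub>R a + u *\<^sub>R b" by (auto simp: in_segment)
    have u0: "u \<noteq> 0" using u a0 by auto
    have u1: "u \<noteq> 1" using u b0 by auto
    have "u *\<^sub>R b = - ((1-u) *\<^sub>R a)" using u(3) by (simp add: eq_neg_iff_add_eq_0 add.commute)
    hence "b = (- (1-u) / u) *\<^sub>R a" using u0
      by (metis (no_types, lifting) divide_inverse_commute scaleR_minus_left scaleR_scaleR
          inverse_eq_divide mult_1 right_inverse scaleR_one mult.commute)
    moreover have "- (1-u) / u \<noteq> 0" using u0 u1 by simp
    ultimately show ?thesis unfolding N_def using ratio_scale[OF lin] by metis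
  qed
  show ?thesis
  proof (cases "\<exists>x0::'a. x0 \<noteq> 0")
    case True
    then obtain x0 :: 'a where x0: "x0 \<noteq> 0" by blast
    show ?thesis
    proof (intro exI[of _ "N x0 / norm x0"] conjI allI)
      show "N x0 / norm x0 \<ge> 0" using N0 by simp
      fix x :: 'a
      show "norm (T x) = N x0 / norm x0 * norm x"
      proof (cases "x = 0")
        case True thus ?thesis by simp
      next
        case False
        have "N x / norm x = N x0 / norm x0" using eq[OF False x0] .
        thus ?thesis using False by (simp add: N_def field_simps)
      qed
    qed
  next
    case False
    thus ?thesis by (intro exI[of _ 0]) auto
  qed
qed


end
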